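(* Let $s\in\mathbb{N}$, $m\ge s-1$, $n=9m$, $w_1,\dots,w_s\in\mathbb{C}$, $X=X(w_1,\dots,w_s)$, and let $\phi\in\mathbb{C}_m(\mathbb{Z})$ be a reproducing filter for $X$ with $\|\phi\|_2^2\le 2s/(2m+1)$. Let $\mathsf{S}_n(\phi)=\{z\in\mathbb{T}_n:|\phi(z)|\ge1\}$, let $\mathbf{E}_{m,n}(\phi)$ be the optimal value and $\rho^X$ an optimal solution of $$\min_{\rho\in\mathbb{C}_{5m}(\mathbb{Z})}\Big\{\sup_{z\in\mathbb{T}}|\rho(z)|:\ \rho(z)\phi(z)^2=1\ \ \forall z\in\mathsf{S}_n(\phi)\Big\},$$ and let $\varphi^X\in\mathbb{C}(\mathbb{Z})$ be defined by $\varphi^X(z)=\phi(z)^2+\rho^X(z)\big(\phi(z)^2-\phi(z)^4\big)$. Then $$\max\{\|\mathcal{F}_n[\varphi^X]\|_1,\,18s\|\mathcal{F}_n[\varphi^X]\|_\infty\}\le\frac{36s}{\sqrt{2n+1}}\big(\mathbf{E}_{m,n}(\phi)+1\big).$$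
   Context: $\mathbb{C}(\mathbb{Z})$: two-sided complex sequences; $\mathbb{C}_p(\mathbb{Z})$: those with $x_t=0$ for $|t|>p$. Each $u\in\mathbb{C}_p(\mathbb{Z})$ is identified with its $z$-transform (Laurent polynomial) $u(z)=\sum_\tau u_\tau z^{-\tau}$; products of Laurent polynomials correspond to convolutions $(u*v)_t=\sum_\tau u_\tau v_{t-\tau}$. $(\Delta x)_t=x_{t-1}$; $X(w_1,\dots,w_s)=\{x:\mathsf{f}(\Delta)x=0\}$ with $\mathsf{f}(z)=\prod_k(1-w_kz)$; $\phi$ is reproducing if $\phi*x=x$ for all $x\in X$. $\mathbb{T}$ is the unit circle and $\mathbb{T}_n=\{\exp(i2\pi k/(2n+1)):k=-n,\dots,n\}$. DFT $(\mathcal{F}_n[u])_k=(2n+1)^{-1/2}\sum_{|\tau|\le n}\exp(-i2\pi k\tau/(2n+1))u_\tau$, $k=0,\dots,2n$. *)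

theory Defs
  imports "HOL-Analysis.Analysis"
begin

type_synonym seq = "int \<Rightarrow> complex"

definition Cp :: "nat \<Rightarrow> seq set" where
  "Cp p = {x. \<forall>t. \<bar>t\<bar> > int p \<longrightarrow> x t = 0}"

definition ztrans :: "seq \<Rightarrow> complex \<Rightarrow> complex" where
  "ztrans u z = (\<Sum>\<tau> \<in> {\<tau>. u \<tau> \<noteq> 0}. u \<tau> * z powi (- \<tau>))"

definition conv :: "seq \<Rightarrow> seq \<Rightarrow> seq" where
  "conv u v t = (\<Sum>\<tau> \<in> {\<tau>. u \<tau> \<noteq> 0}. u \<tau> * v (t - \<tau>))"

definition Delta :: "seq \<Rightarrow> seq" where
  "Delta x t = x (t - 1)"

definition factor_op :: "complex \<Rightarrow> seq \<Rightarrow> seq" where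
  "factor_op w x t = x t - w * Delta x t"

text \<open>f(Delta) x with f(z) = prod_k (1 - w_k z).\<close>
definition f_Delta :: "complex list \<Rightarrow> seq \<Rightarrow> seq" where
  "f_Delta ws x = foldr factor_op ws x"

definition Xspace :: "complex list \<Rightarrow> seq set" where
  "Xspace ws = {x. f_Delta ws x = (\<lambda>_. 0)}"

definition reproducing :: "seq \<Rightarrow> complex list \<Rightarrow> bool" where
  "reproducing \<phi> ws \<longleftrightarrow> (\<forall>x \<in> Xspace ws. conv \<phi> x = x)"

definition norm2sq :: "seq \<Rightarrow> real" where
  "norm2sq u = (\<Sum>\<tau> \<in> {\<tau>. u \<tau> \<noteq> 0}. (cmod (u \<tau>))\<^sup>2)"

definition Tn :: "nat \<Rightarrow> complex set" where
  "Tn n = {exp (\<i> * of_real (2 * pi * of_int k / (2 * real n + 1))) | k. k \<in> {- int n .. int n}}"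

definition Sn :: "nat \<Rightarrow> seq \<Rightarrow> complex set" where
  "Sn n \<phi> = {z \<in> Tn n. cmod (ztrans \<phi> z) \<ge> 1}"

definition supT :: "seq \<Rightarrow> real" where
  "supT \<rho> = Sup {cmod (ztrans \<rho> z) | z. cmod z = 1}"

definition feasible :: "nat \<Rightarrow> nat \<Rightarrow> seq \<Rightarrow> seq \<Rightarrow> bool" where
  "feasible m n \<phi> \<rho> \<longleftrightarrow> \<rho> \<in> Cp (5 * m) \<and>
     (\<forall>z \<in> Sn n \<phi>. ztrans \<rho> z * (ztrans \<phi> z)\<^sup>2 = 1)"

definition Emn :: "nat \<Rightarrow> nat \<Rightarrow> seq \<Rightarrow> real" where
  "Emn m n \<phi> = Inf {supT \<rho> | \<rho>. feasible m n \<phi> \<rho>}"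

definition optimal_solution :: "nat \<Rightarrow> nat \<Rightarrow> seq \<Rightarrow> seq \<Rightarrow> bool" where
  "optimal_solution m n \<phi> \<rho> \<longleftrightarrow> feasible m n \<phi> \<rho> \<and> supT \<rho> = Emn m n \<phi>"

text \<open>varphi^X(z) = phi(z)^2 + rho(z)(phi(z)^2 - phi(z)^4), via convolutions.\<close>
definition varphiX :: "seq \<Rightarrow> seq \<Rightarrow> seq" where
  "varphiX \<phi> \<rho> = (let p2 = conv \<phi> \<phi>; p4 = conv p2 p2
                    in (\<lambda>t. p2 t + conv \<rho> (\<lambda>t'. p2 t' - p4 t') t))"

definition DFT :: "nat \<Rightarrow> seq \<Rightarrow> nat \<Rightarrow> complex" where
  "DFT n u k = (1 / sqrt (2 * real n + 1)) *
     (\<Sum>\<tau> \<in> {- int n .. int n}. exp (- \<i> * of_real (2 * pi * real k * of_int \<tau> / (2 * real n + 1))) * u \<tau>)"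

definition DFT_norm1 :: "nat \<Rightarrow> seq \<Rightarrow> real" where
  "DFT_norm1 n u = (\<Sum>k \<in> {0..2*n}. cmod (DFT n u k))"

definition DFT_norminf :: "nat \<Rightarrow> seq \<Rightarrow> real" where
  "DFT_norminf n u = Max ((\<lambda>k. cmod (DFT n u k)) ` {0..2*n})"

end

theory Submission imports Defs begin

lemma roots_sum_zero:
  fixes j :: int and N :: nat
  assumes "j \<noteq> 0" "\<bar>j\<bar> < int N"
  shows "(\<Sum>k<N. exp (\<i> * of_real (2 * pi * real k * of_int j / real N))) = 0"
proof -
  define q where "q = exp (\<i> * of_real (2 * pi * of_int j / real N))"
  have Npos: "N > 0" using assms by linarith
  have e: "exp (\<i> * of_real (2 * pi * real k * of_int j / real N)) = q ^ k" for k
  proof -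
    have "\<i> * of_real (2 * pi * real k * of_int j / real N) = of_nat k * (\<i> * of_real (2 * pi * of_int j / real N))"
      by simp
    then show ?thesis unfolding q_def by (simp only: exp_of_nat_mult)
  qed
  have qN: "q ^ N = 1"
  proof -
    have "q ^ N = exp (of_nat N * (\<i> * of_real (2 * pi * of_int j / real N)))"
      unfolding q_def by (simp only: exp_of_nat_mult)
    also have "of_nat N * (\<i> * of_real (2 * pi * of_int j / real N)) = \<i> * of_real (2 * pi * of_int j)"
      using Npos by simp
    also have "exp \<dots> = 1" unfolding exp_eq_1 by (auto intro!: exI[of _ j])
    finally show ?thesis .
  qed
  have q1: "q \<noteq> 1"
  proof
    assume "q = 1"
    then obtain l :: int where l: "2 * pi * of_int j / real N = of_int (2 * l) * pi"
      unfolding q_def exp_eq_1 by auto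
    then have "real_of_int j = real N * of_int l" using Npos by (simp add: field_simps)
    then have "j = int N * l" by (metis of_int_eq_iff of_int_mult of_int_of_nat_eq)
    have l0: "l \<noteq> 0" using \<open>j = int N * l\<close> assms(1) by auto
    have "\<bar>j\<bar> = int N * \<bar>l\<bar>" using \<open>j = int N * l\<close> by (simp add: abs_mult)
    also have "\<dots> \<ge> int N * 1" using l0 by (intro mult_left_mono) auto
    finally show False using assms(2) by simp
  qed
  show ?thesis unfolding e using geometric_sum[OF q1, of N] qN by simp
qed


definition I :: "nat \<Rightarrow> int set" where "I p = {- int p .. int p}"

lemma finite_I[simp]: "finite (I p)" by (simp add: I_def)

lemma Cp_supp: "u \<in> Cp p \<Longrightarrow> {\<tau>. u \<tau> \<noteq> 0} \<subseteq> I p"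
proof
  fix x assume "u \<in> Cp p" "x \<in> {\<tau>. u \<tau> \<noteq> 0}"
  then have "\<not> \<bar>x\<bar> > int p" unfolding Cp_def by auto
  then show "x \<in> I p" unfolding I_def by auto
qed

lemma Cp_mono: "u \<in> Cp p \<Longrightarrow> p \<le> q \<Longrightarrow> u \<in> Cp q"
  unfolding Cp_def by auto

lemma ztrans_superset:
  "finite A \<Longrightarrow> {\<tau>. u \<tau> \<noteq> 0} \<subseteq> A \<Longrightarrow> ztrans u z = (\<Sum>\<tau>\<in>A. u \<tau> * z powi (- \<tau>))"
  unfolding ztrans_def by (rule sum.mono_neutral_left) auto

lemma conv_superset:
  "finite A \<Longrightarrow> {\<tau>. u \<tau> \<noteq> 0} \<subseteq> A \<Longrightarrow> conv u v t = (\<Sum>\<tau>\<in>A. u \<tau> * v (t - \<tau>))"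
  unfolding conv_def by (rule sum.mono_neutral_left) auto

lemma norm2sq_superset:
  "finite A \<Longrightarrow> {\<tau>. u \<tau> \<noteq> 0} \<subseteq> A \<Longrightarrow> norm2sq u = (\<Sum>\<tau>\<in>A. (cmod (u \<tau>))\<^sup>2)"
  unfolding norm2sq_def by (rule sum.mono_neutral_left) auto

lemma ztrans_Cp: "u \<in> Cp p \<Longrightarrow> p \<le> q \<Longrightarrow> ztrans u z = (\<Sum>\<tau>\<in>I q. u \<tau> * z powi (- \<tau>))"
  by (rule ztrans_superset) (auto dest: Cp_supp Cp_mono)

lemma conv_Cp: "u \<in> Cp p \<Longrightarrow> conv u v t = (\<Sum>\<tau>\<in>I p. u \<tau> * v (t - \<tau>))"
  by (rule conv_superset) (auto dest: Cp_supp)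

lemma conv_in_Cp:
  assumes "u \<in> Cp a" "v \<in> Cp b" shows "conv u v \<in> Cp (a + b)"
  unfolding Cp_def
proof (intro CollectI allI impI)
  fix t :: int assume t: "\<bar>t\<bar> > int (a + b)"
  have "u \<tau> * v (t - \<tau>) = 0" if "\<tau> \<in> I a" for \<tau>
  proof -
    from that have "\<bar>\<tau>\<bar> \<le> int a" by (auto simp: I_def)
    then have "\<bar>t - \<tau>\<bar> > int b" using t by linarith
    then show ?thesis using assms(2) unfolding Cp_def by auto
  qed
  then show "conv u v t = 0" by (auto simp: conv_Cp[OF assms(1)] intro!: sum.neutral)
qed

lemma add_in_Cp: "u \<in> Cp p \<Longrightarrow> v \<in> Cp p \<Longrightarrow> (\<lambda>t. u t + v t) \<in> Cp p"
  unfolding Cp_def by auto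

lemma diff_in_Cp: "u \<in> Cp p \<Longrightarrow> v \<in> Cp p \<Longrightarrow> (\<lambda>t. u t - v t) \<in> Cp p"
  unfolding Cp_def by auto

lemma ztrans_add: "u \<in> Cp p \<Longrightarrow> v \<in> Cp p \<Longrightarrow> ztrans (\<lambda>t. u t + v t) z = ztrans u z + ztrans v z"
  by (simp add: ztrans_Cp[of _ p p] add_in_Cp sum.distrib distrib_right)

lemma ztrans_diff: "u \<in> Cp p \<Longrightarrow> v \<in> Cp p \<Longrightarrow> ztrans (\<lambda>t. u t - v t) z = ztrans u z - ztrans v z"
  by (simp add: ztrans_Cp[of _ p p] diff_in_Cp sum_subtractf left_diff_distrib)

lemma ztrans_conv:
  assumes u: "u \<in> Cp a" and v: "v \<in> Cp b" and z: "z \<noteq> 0"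
  shows "ztrans (conv u v) z = ztrans u z * ztrans v z"
proof -
  have inner: "(\<Sum>t\<in>I (a + b). v (t - \<tau>) * z powi (- t)) = z powi (- \<tau>) * ztrans v z"
    if "\<tau> \<in> I a" for \<tau>
  proof -
    have inj: "inj_on (\<lambda>t. t - \<tau>) (I (a + b))" by (auto simp: inj_on_def)
    have sub: "{\<sigma>. v \<sigma> \<noteq> 0} \<subseteq> (\<lambda>t. t - \<tau>) ` I (a + b)"
    proof
      fix \<sigma> assume "\<sigma> \<in> {\<sigma>. v \<sigma> \<noteq> 0}"
      then have "\<sigma> \<in> I b" using Cp_supp[OF v] by auto
      then have "\<sigma> + \<tau> \<in> I (a + b)" using that by (auto simp: I_def)
      then show "\<sigma> \<in> (\<lambda>t. t - \<tau>) ` I (a + b)" by (auto intro!: image_eqI[of _ _ "\<sigma> + \<tau>"])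
    qed
    have "(\<Sum>t\<in>I (a + b). v (t - \<tau>) * z powi (- t))
        = (\<Sum>\<sigma>\<in>(\<lambda>t. t - \<tau>) ` I (a + b). v \<sigma> * z powi (- (\<sigma> + \<tau>)))"
      by (simp only: sum.reindex[OF inj] o_def diff_add_cancel)
    also have "\<dots> = (\<Sum>\<sigma>\<in>(\<lambda>t. t - \<tau>) ` I (a + b). z powi (- \<tau>) * (v \<sigma> * z powi (- \<sigma>)))"
    proof (intro sum.cong refl)
      fix \<sigma> :: int
      have "z powi (- (\<sigma> + \<tau>)) = z powi (- \<tau> + - \<sigma>)" by (simp add: add.commute)
      also have "\<dots> = z powi (- \<tau>) * z powi (- \<sigma>)" using z by (intro power_int_add) simp
      finally show "v \<sigma> * z powi (- (\<sigma> + \<tau>)) = z powi (- \<tau>) * (v \<sigma> * z powi (- \<sigma>))" by simp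
    qed
    also have "\<dots> = z powi (- \<tau>) * ztrans v z"
      by (simp add: sum_distrib_left[symmetric] ztrans_superset[OF _ sub])
    finally show ?thesis .
  qed
  have "ztrans (conv u v) z = (\<Sum>t\<in>I (a + b). conv u v t * z powi (- t))"
    by (rule ztrans_Cp[OF conv_in_Cp[OF u v]]) simp
  also have "\<dots> = (\<Sum>t\<in>I (a + b). \<Sum>\<tau>\<in>I a. u \<tau> * (v (t - \<tau>) * z powi (- t)))"
    by (simp add: conv_Cp[OF u] sum_distrib_left sum_distrib_right mult_ac)
  also have "\<dots> = (\<Sum>\<tau>\<in>I a. u \<tau> * (\<Sum>t\<in>I (a + b). v (t - \<tau>) * z powi (- t)))"
    by (subst sum.swap) (simp add: sum_distrib_left)
  also have "\<dots> = (\<Sum>\<tau>\<in>I a. u \<tau> * z powi (- \<tau>) * ztrans v z)"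
    by (intro sum.cong) (auto simp: inner)
  also have "\<dots> = ztrans u z * ztrans v z"
    by (simp add: ztrans_Cp[OF u order_refl] sum_distrib_right)
  finally show ?thesis .
qed


definition EE :: "nat \<Rightarrow> nat \<Rightarrow> int \<Rightarrow> complex" where
  "EE N k j = exp (\<i> * of_real (2 * pi * real k * of_int j / real N))"

definition zk :: "nat \<Rightarrow> nat \<Rightarrow> complex" where
  "zk n k = exp (\<i> * of_real (2 * pi * real k / (2 * real n + 1)))"

lemma zk_powi: "zk n k powi j = EE (2 * n + 1) k j"
  unfolding zk_def EE_def exp_power_int by (simp add: mult_ac add_ac)

lemma norm_zk[simp]: "cmod (zk n k) = 1"
  unfolding zk_def by simp

lemma zk_nz[simp]: "zk n k \<noteq> 0"
  unfolding zk_def by simp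

lemma DFT_ztrans:
  assumes "u \<in> Cp p" "p \<le> n"
  shows "DFT n u k = ztrans u (zk n k) / sqrt (2 * real n + 1)"
proof -
  have "ztrans u (zk n k) = (\<Sum>\<tau>\<in>I n. u \<tau> * zk n k powi (- \<tau>))"
    by (rule ztrans_Cp[OF assms])
  also have "\<dots> = (\<Sum>\<tau>\<in>{- int n .. int n}. exp (- \<i> * of_real (2 * pi * real k * of_int \<tau> / (2 * real n + 1))) * u \<tau>)"
    unfolding I_def zk_powi EE_def by (intro sum.cong refl) (simp add: mult_ac add_ac)
  finally show ?thesis unfolding DFT_def by simp
qed

lemma EE_mult: "EE N k a * EE N k b = EE N k (a + b)"
  unfolding EE_def by (simp add: exp_add[symmetric] algebra_simps add_divide_distrib)

lemma cnj_EE: "cnj (EE N k a) = EE N k (- a)"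
proof -
  have "cnj (\<i> * of_real (2 * pi * real k * of_int a / real N)) = \<i> * of_real (2 * pi * real k * of_int (- a) / real N)"
    by simp
  then show ?thesis unfolding EE_def exp_cnj by metis
qed

lemma sum_EE:
  assumes "\<bar>j\<bar> < int N"
  shows "(\<Sum>k<N. EE N k j) = (if j = 0 then of_nat N else 0)"
  using roots_sum_zero[OF _ assms] unfolding EE_def by auto

lemma parseval:
  assumes u: "u \<in> Cp m" and mn: "2 * m < 2 * n + 1"
  shows "(\<Sum>k\<in>{0..2*n}. (cmod (ztrans u (zk n k)))\<^sup>2) = (2 * real n + 1) * norm2sq u"
proof -
  define N where "N = 2 * n + 1"
  have set: "{0..2*n} = {..<N}" unfolding N_def by auto
  have w: "ztrans u (zk n k) = (\<Sum>\<tau>\<in>I m. u \<tau> * EE N k (- \<tau>))" for k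
    unfolding N_def zk_powi[symmetric] by (rule ztrans_Cp[OF u order_refl])
  have cw: "cnj (ztrans u (zk n k)) = (\<Sum>\<sigma>\<in>I m. cnj (u \<sigma>) * EE N k \<sigma>)" for k
    unfolding w by (simp add: cnj_EE)
  have "complex_of_real (\<Sum>k\<in>{0..2*n}. (cmod (ztrans u (zk n k)))\<^sup>2)
      = (\<Sum>k<N. ztrans u (zk n k) * cnj (ztrans u (zk n k)))"
    unfolding set of_real_sum complex_norm_square ..
  also have "\<dots> = (\<Sum>k<N. \<Sum>\<sigma>\<in>I m. \<Sum>\<tau>\<in>I m. u \<tau> * cnj (u \<sigma>) * EE N k (\<sigma> - \<tau>))"
    unfolding cw by (subst w) (simp add: sum_distrib_left sum_distrib_right mult_ac EE_mult)
  also have "\<dots> = (\<Sum>\<sigma>\<in>I m. \<Sum>\<tau>\<in>I m. u \<tau> * cnj (u \<sigma>) * (\<Sum>k<N. EE N k (\<sigma> - \<tau>)))"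
    by (simp add: sum_distrib_left sum.swap[of _ "{..<N}"])
  also have "\<dots> = (\<Sum>\<sigma>\<in>I m. \<Sum>\<tau>\<in>I m. if \<sigma> = \<tau> then u \<tau> * cnj (u \<sigma>) * of_nat N else 0)"
  proof (intro sum.cong refl)
    fix \<sigma> \<tau> assume "\<sigma> \<in> I m" "\<tau> \<in> I m"
    then have "\<bar>\<sigma> - \<tau>\<bar> < int N" using mn unfolding I_def N_def by auto
    then show "u \<tau> * cnj (u \<sigma>) * (\<Sum>k<N. EE N k (\<sigma> - \<tau>)) = (if \<sigma> = \<tau> then u \<tau> * cnj (u \<sigma>) * of_nat N else 0)"
      by (simp add: sum_EE)
  qed
  also have "\<dots> = (\<Sum>\<tau>\<in>I m. u \<tau> * cnj (u \<tau>) * of_nat N)"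
    by (simp add: sum.delta')
  also have "\<dots> = complex_of_real ((2 * real n + 1) * norm2sq u)"
    unfolding norm2sq_superset[OF finite_I Cp_supp[OF u]] of_real_mult of_real_sum complex_norm_square
    by (simp add: sum_distrib_left N_def mult_ac add_ac)
  finally show ?thesis by (simp only: of_real_eq_iff)
qed

lemma ztrans_bound:
  assumes "u \<in> Cp p" "cmod z = 1"
  shows "cmod (ztrans u z) \<le> (\<Sum>\<tau>\<in>I p. cmod (u \<tau>))"
proof -
  have "cmod (ztrans u z) = cmod (\<Sum>\<tau>\<in>I p. u \<tau> * z powi (- \<tau>))"
    by (simp add: ztrans_Cp[OF assms(1) order_refl])
  also have "\<dots> \<le> (\<Sum>\<tau>\<in>I p. cmod (u \<tau> * z powi (- \<tau>)))" by (rule norm_sum)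
  also have "\<dots> = (\<Sum>\<tau>\<in>I p. cmod (u \<tau>))"
    using assms(2) by (simp add: norm_mult norm_power_int)
  finally show ?thesis .
qed

lemma supT_upper:
  assumes "u \<in> Cp p" "cmod z = 1"
  shows "cmod (ztrans u z) \<le> supT u"
  unfolding supT_def
proof (rule cSup_upper)
  show "cmod (ztrans u z) \<in> {cmod (ztrans u z) |z. cmod z = 1}" using assms(2) by auto
  show "bdd_above {cmod (ztrans u z) |z. cmod z = 1}"
    by (rule bdd_aboveI[of _ "\<Sum>\<tau>\<in>I p. cmod (u \<tau>)"]) (auto intro: ztrans_bound[OF assms(1)])
qed

lemma zk_in_Tn:
  assumes "k \<in> {0..2*n}"
  shows "zk n k \<in> Tn n"
proof (cases "k \<le> n")
  case True
  then show ?thesis unfolding Tn_def zk_def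
    by (intro CollectI exI[of _ "int k"]) auto
next
  case False
  define j where "j = int k - (2 * int n + 1)"
  have j: "j \<in> {- int n .. int n}" using False assms unfolding j_def by auto
  have r: "2 * pi * real k / (2 * real n + 1) = 2 * pi * of_int j / (2 * real n + 1) + of_int 1 * pi * 2"
    unfolding j_def by (simp add: field_simps)
  have "zk n k = exp (\<i> * of_real (2 * pi * of_int j / (2 * real n + 1)) + \<i> * (of_int 1 * (of_real pi * 2)))"
    unfolding zk_def r by (simp add: algebra_simps)
  also have "\<dots> = exp (\<i> * of_real (2 * pi * of_int j / (2 * real n + 1)))"
    by (rule exp_plus_2pin)
  finally have "zk n k = exp (\<i> * of_real (2 * pi * of_int j / (2 * real n + 1)))" .
  then show ?thesis unfolding Tn_def using j by blast
qed


lemma pointwise_bound: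
  fixes F R V E :: "_"
  assumes V: "V = F\<^sup>2 + R * (F\<^sup>2 - F ^ 4)" and RE: "cmod R \<le> E" and S: "cmod F \<ge> 1 \<Longrightarrow> R * F\<^sup>2 = 1"
  shows "cmod V \<le> (1 + 2 * E) * (cmod F)\<^sup>2 \<and> cmod V \<le> 2 * (E + 1)"
proof (cases "cmod F \<ge> 1")
  case True
  have E0: "E \<ge> 0" using RE norm_ge_zero order_trans by blast
  have "V = F\<^sup>2 + R * F\<^sup>2 - (R * F\<^sup>2) * F\<^sup>2" unfolding V by (simp add: algebra_simps power2_eq_square power4_eq_xxxx)
  then have "V = 1" using S[OF True] by simp
  moreover have "1 \<le> (cmod F)\<^sup>2" using True by (simp add: one_le_power)
  moreover have "(cmod F)\<^sup>2 \<le> (1 + 2 * E) * (cmod F)\<^sup>2" using E0 by (simp add: mult_le_cancel_right1)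
  ultimately show ?thesis using E0 by auto
next
  case False
  have E0: "E \<ge> 0" using RE norm_ge_zero order_trans by blast
  have F2: "(cmod F)\<^sup>2 \<le> 1" using False by (simp add: power_le_one)
  have "V = F\<^sup>2 * (1 + R * (1 - F\<^sup>2))" unfolding V by (simp add: algebra_simps power2_eq_square power4_eq_xxxx)
  then have "cmod V = (cmod F)\<^sup>2 * cmod (1 + R * (1 - F\<^sup>2))" by (simp add: norm_mult norm_power)
  also have "cmod (1 + R * (1 - F\<^sup>2)) \<le> 1 + cmod R * (1 + (cmod F)\<^sup>2)"
  proof -
    have "cmod (1 + R * (1 - F\<^sup>2)) \<le> 1 + cmod R * cmod (1 - F\<^sup>2)"
      using norm_triangle_ineq[of 1 "R * (1 - F\<^sup>2)"] by (simp add: norm_mult)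
    also have "cmod (1 - F\<^sup>2) \<le> 1 + (cmod F)\<^sup>2"
      using norm_triangle_ineq4[of 1 "F\<^sup>2"] by (simp add: norm_power)
    then have "cmod R * cmod (1 - F\<^sup>2) \<le> cmod R * (1 + (cmod F)\<^sup>2)" by (simp add: mult_left_mono)
    finally show ?thesis by simp
  qed
  also have "\<dots> \<le> 1 + 2 * E"
  proof -
    have "cmod R * (1 + (cmod F)\<^sup>2) \<le> E * 2" using RE F2 E0 by (intro mult_mono) auto
    then show ?thesis by simp
  qed
  finally have A: "cmod V \<le> (cmod F)\<^sup>2 * (1 + 2 * E)" by (simp add: mult_left_mono)
  have B0: "(cmod F)\<^sup>2 * (1 + 2 * E) \<le> 1 * (1 + 2 * E)" by (rule mult_right_mono[OF F2]) (use E0 in simp)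
  then have B: "(cmod F)\<^sup>2 * (1 + 2 * E) \<le> 1 + 2 * E" by simp
  have C1: "cmod V \<le> (1 + 2 * E) * (cmod F)\<^sup>2" using A by (simp only: mult.commute)
  have C2: "cmod V \<le> 1 + 2 * E" using A B by (rule order_trans)
  show ?thesis using C1 C2 by simp
qed

theorem lemma1:
  fixes ws :: "complex list" and m n s :: nat and \<phi> \<rho>X :: "int \<Rightarrow> complex"
  assumes "s = length ws"
    and "int m \<ge> int s - 1"
    and "n = 9 * m"
    and "\<phi> \<in> Cp m"
    and "reproducing \<phi> ws"
    and "norm2sq \<phi> \<le> 2 * real s / (2 * real m + 1)"
    and "optimal_solution m n \<phi> \<rho>X"
  shows "max (DFT_norm1 n (varphiX \<phi> \<rho>X)) (18 * real s * DFT_norminf n (varphiX \<phi> \<rho>X))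
           \<le> 36 * real s / sqrt (2 * real n + 1) * (Emn m n \<phi> + 1)"
proof -
  note phi = assms(4)
  have feas: "feasible m n \<phi> \<rho>X" and Eeq: "supT \<rho>X = Emn m n \<phi>"
    using assms(7) unfolding optimal_solution_def by auto
  have rho: "\<rho>X \<in> Cp (5 * m)" using feas unfolding feasible_def by auto
  have Sfe: "\<And>z. z \<in> Sn n \<phi> \<Longrightarrow> ztrans \<rho>X z * (ztrans \<phi> z)\<^sup>2 = 1"
    using feas unfolding feasible_def by auto
  define E where "E = Emn m n \<phi>"
  define Q where "Q = sqrt (2 * real n + 1)"
  have Qpos: "Q > 0" unfolding Q_def by simp
  define p2 where "p2 = conv \<phi> \<phi>"
  define p4 where "p4 = conv p2 p2"
  define d where "d = (\<lambda>t. p2 t - p4 t)"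
  have p2C: "p2 \<in> Cp (m + m)" unfolding p2_def by (rule conv_in_Cp[OF phi phi])
  have p4C: "p4 \<in> Cp ((m + m) + (m + m))" unfolding p4_def by (rule conv_in_Cp[OF p2C p2C])
  have p2C': "p2 \<in> Cp ((m + m) + (m + m))" by (rule Cp_mono[OF p2C]) simp
  have dC: "d \<in> Cp ((m + m) + (m + m))" unfolding d_def by (rule diff_in_Cp[OF p2C' p4C])
  have cC: "conv \<rho>X d \<in> Cp (5 * m + ((m + m) + (m + m)))" by (rule conv_in_Cp[OF rho dC])
  have cC': "conv \<rho>X d \<in> Cp n" by (rule Cp_mono[OF cC]) (simp add: assms(3))
  have p2n: "p2 \<in> Cp n" by (rule Cp_mono[OF p2C]) (simp add: assms(3))
  have vX: "varphiX \<phi> \<rho>X = (\<lambda>t. p2 t + conv \<rho>X d t)"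
    unfolding varphiX_def p2_def p4_def d_def Let_def ..
  have vC: "varphiX \<phi> \<rho>X \<in> Cp n" unfolding vX by (rule add_in_Cp[OF p2n cC'])
  have zt: "ztrans (varphiX \<phi> \<rho>X) z = (ztrans \<phi> z)\<^sup>2 + ztrans \<rho>X z * ((ztrans \<phi> z)\<^sup>2 - (ztrans \<phi> z) ^ 4)"
    if "z \<noteq> 0" for z
  proof -
    have a: "ztrans p2 z = (ztrans \<phi> z)\<^sup>2" unfolding p2_def using ztrans_conv[OF phi phi that]
      by (simp add: power2_eq_square)
    have b: "ztrans p4 z = (ztrans \<phi> z) ^ 4" unfolding p4_def using ztrans_conv[OF p2C p2C that] a
      by (simp add: power4_eq_xxxx power2_eq_square)
    have c: "ztrans d z = ztrans p2 z - ztrans p4 z" unfolding d_def by (rule ztrans_diff[OF p2C' p4C])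
    show ?thesis unfolding vX ztrans_add[OF p2n cC'] ztrans_conv[OF rho dC that] c a b ..
  qed
  have key: "cmod (DFT n (varphiX \<phi> \<rho>X) k) \<le> (1 + 2 * E) * (cmod (ztrans \<phi> (zk n k)))\<^sup>2 / Q
      \<and> cmod (DFT n (varphiX \<phi> \<rho>X) k) \<le> 2 * (E + 1) / Q" if k: "k \<in> {0..2*n}" for k
  proof -
    let ?z = "zk n k"
    have D: "DFT n (varphiX \<phi> \<rho>X) k = ztrans (varphiX \<phi> \<rho>X) ?z / Q"
      unfolding Q_def by (rule DFT_ztrans[OF vC order_refl])
    have RE: "cmod (ztrans \<rho>X ?z) \<le> E" unfolding E_def Eeq[symmetric]
      by (rule supT_upper[OF rho]) simp
    have S: "ztrans \<rho>X ?z * (ztrans \<phi> ?z)\<^sup>2 = 1" if "cmod (ztrans \<phi> ?z) \<ge> 1"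
      using Sfe[of ?z] zk_in_Tn[OF k] that unfolding Sn_def by auto
    have pb: "cmod (ztrans (varphiX \<phi> \<rho>X) ?z) \<le> (1 + 2 * E) * (cmod (ztrans \<phi> ?z))\<^sup>2 \<and>
        cmod (ztrans (varphiX \<phi> \<rho>X) ?z) \<le> 2 * (E + 1)"
      by (rule pointwise_bound[OF zt[OF zk_nz] RE S])
    show ?thesis unfolding D using pb Qpos by (simp add: norm_divide divide_right_mono)
  qed
  have E0: "E \<ge> 0"
  proof -
    have "cmod (ztrans \<rho>X 1) \<le> E" unfolding E_def Eeq[symmetric] by (rule supT_upper[OF rho]) simp
    then show ?thesis using norm_ge_zero order_trans by blast
  qed
  have mn: "2 * m < 2 * n + 1" using assms(3) by simp
  have pars: "(\<Sum>k\<in>{0..2*n}. (cmod (ztrans \<phi> (zk n k)))\<^sup>2) = (2 * real n + 1) * norm2sq \<phi>"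
    by (rule parseval[OF phi mn])
  have "(2 * real n + 1) * norm2sq \<phi> \<le> (2 * real n + 1) * (2 * real s / (2 * real m + 1))"
    using assms(6) by (intro mult_left_mono) auto
  also have "\<dots> \<le> 18 * real s"
  proof -
    have "(2 * real n + 1) \<le> 9 * (2 * real m + 1)" using assms(3) by simp
    then have "(2 * real n + 1) * (2 * real s) \<le> 18 * real s * (2 * real m + 1)"
    proof -
      have "(2 * real n + 1) * (2 * real s) \<le> 9 * (2 * real m + 1) * (2 * real s)"
        using \<open>(2 * real n + 1) \<le> 9 * (2 * real m + 1)\<close> by (rule mult_right_mono) simp
      then show ?thesis by (simp add: algebra_simps)
    qed
    then show ?thesis by (simp add: field_simps)
  qed
  finally have P: "(\<Sum>k\<in>{0..2*n}. (cmod (ztrans \<phi> (zk n k)))\<^sup>2) \<le> 18 * real s" using pars by simp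
  have L1: "DFT_norm1 n (varphiX \<phi> \<rho>X) \<le> 36 * real s / Q * (E + 1)"
  proof -
    have "DFT_norm1 n (varphiX \<phi> \<rho>X) \<le> (\<Sum>k\<in>{0..2*n}. (1 + 2 * E) * (cmod (ztrans \<phi> (zk n k)))\<^sup>2 / Q)"
      unfolding DFT_norm1_def using key by (intro sum_mono) auto
    also have "\<dots> = (1 + 2 * E) / Q * (\<Sum>k\<in>{0..2*n}. (cmod (ztrans \<phi> (zk n k)))\<^sup>2)"
      by (simp add: sum_distrib_left sum_divide_distrib)
    also have "\<dots> \<le> (1 + 2 * E) / Q * (18 * real s)"
      using P E0 Qpos by (intro mult_left_mono) auto
    also have "\<dots> \<le> 36 * real s / Q * (E + 1)"
    proof -
      have "(1 + 2 * E) * (18 * real s) \<le> 36 * real s * (E + 1)" by (simp add: algebra_simps)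
      then show ?thesis using Qpos by (simp add: divide_right_mono)
    qed
    finally show ?thesis .
  qed
  have Linf: "DFT_norminf n (varphiX \<phi> \<rho>X) \<le> 2 * (E + 1) / Q"
    unfolding DFT_norminf_def using key by (subst Max_le_iff) auto
  have "18 * real s * DFT_norminf n (varphiX \<phi> \<rho>X) \<le> 18 * real s * (2 * (E + 1) / Q)"
    using Linf by (intro mult_left_mono) auto
  also have "\<dots> = 36 * real s / Q * (E + 1)" by simp
  finally show ?thesis using L1 unfolding E_def Q_def by simp
qed

end
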